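(* Let $n\geqslant2$, $m\geqslant1$, let $\tau$ be a cuspidal $\mathrm{R}$-representation of $\mathrm{GL}_n(k_\mathrm{F})$, and let $g=\mathrm{diag}(\varpi_\mathrm{F}^{\alpha_{n-1}},\dots,\varpi_\mathrm{F}^{\alpha_1},1)$ with integers $0\leqslant\alpha_1\leqslant\dots\leqslant\alpha_{n-1}$ and $\alpha_{n-1}\geqslant m$. Then $$\mathrm{Hom}_{\mathrm{R}[\overline{\mathrm{K}_n\cap g\mathrm{K}_n(m)g^{-1}}]}(1,\tau)=0.$$
   Context: $\mathrm{F}$ non-archimedean local field, ring of integers $\mathfrak{o}_\mathrm{F}$, maximal ideal $\mathfrak{p}_\mathrm{F}=\varpi_\mathrm{F}\mathfrak{o}_\mathrm{F}$, residue field $k_\mathrm{F}$ of characteristic $p$. $\mathrm{R}$ algebraically closed of characteristic $\ell\neq p$. $\mathrm{K}_n=\mathrm{GL}_n(\mathfrak{o}_\mathrm{F})$, $\mathrm{K}_n^1=1+\mathrm{M}_n(\mathfrak{p}_\mathrm{F})$; for a subgroup $H\subseteq\mathrm{K}_n$, $\overline H$ is its image in $\mathrm{K}_n/\mathrm{K}_n^1=\mathrm{GL}_n(k_\mathrm{F})$. For $m\geqslant1$, $\mathrm{K}_n(m)=\{\left(\begin{smallmatrix}a&b\\c&d\end{smallmatrix}\right)\in\mathrm{K}_n: c\in\mathrm{M}_{1\times(n-1)}(\mathfrak{p}_\mathrm{F}^m),\ d\in1+\mathfrak{p}_\mathrm{F}^m\}$ (blocks $(n-1)+1$). Cuspidal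 representation of $\mathrm{GL}_n(k_\mathrm{F})$: irreducible with no nonzero vectors fixed by the unipotent radical of any proper parabolic subgroup. *)

theory Defs
  imports "Jordan_Normal_Form.Determinant" "HOL-Computational_Algebra.Polynomial"
begin

text \<open>A normalised discrete valuation on a field; v is only meaningful on nonzero
  elements (v 0 = infinity by convention, encoded by the explicit x = 0 cases below).\<close>
definition discrete_valuation :: "('f::field \<Rightarrow> int) \<Rightarrow> bool" where
  "discrete_valuation v \<longleftrightarrow>
     (\<forall>x y. x \<noteq> 0 \<longrightarrow> y \<noteq> 0 \<longrightarrow> v (x * y) = v x + v y) \<and>
     (\<forall>x y. x \<noteq> 0 \<longrightarrow> y \<noteq> 0 \<longrightarrow> x + y \<noteq> 0 \<longrightarrow> v (x + y) \<ge> min (v x) (v y)) \<and>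
     (\<exists>x. x \<noteq> 0 \<and> v x = 1)"

text \<open>x lies in p_F^k (with k an integer; 0 lies in every p_F^k).\<close>
definition in_pow_ideal :: "('f::field \<Rightarrow> int) \<Rightarrow> int \<Rightarrow> 'f \<Rightarrow> bool" where
  "in_pow_ideal v k x \<longleftrightarrow> x = 0 \<or> v x \<ge> k"

definition val_ring :: "('f::field \<Rightarrow> int) \<Rightarrow> 'f set" where
  "val_ring v = {x. in_pow_ideal v 0 x}"

definition max_ideal :: "('f::field \<Rightarrow> int) \<Rightarrow> 'f set" where
  "max_ideal v = {x. in_pow_ideal v 1 x}"

definition val_complete :: "('f::field \<Rightarrow> int) \<Rightarrow> bool" where
  "val_complete v \<longleftrightarrow>
     (\<forall>a :: nat \<Rightarrow> 'f.
        (\<forall>N. \<exists>M. \<forall>i\<ge>M. \<forall>j\<ge>M. in_pow_ideal v N (a i - a j)) \<longrightarrow>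
        (\<exists>L. \<forall>N. \<exists>M. \<forall>i\<ge>M. in_pow_ideal v N (a i - L)))"

text \<open>red : o_F \<rightarrow> k is a residue map: a surjective unital ring homomorphism from
  the valuation ring onto k with kernel p_F; so k is (a copy of) the residue field k_F.\<close>
definition residue_map :: "('f::field \<Rightarrow> int) \<Rightarrow> ('f \<Rightarrow> 'k::field) \<Rightarrow> bool" where
  "residue_map v red \<longleftrightarrow>
     (\<forall>x\<in>val_ring v. \<forall>y\<in>val_ring v. red (x + y) = red x + red y \<and> red (x * y) = red x * red y) \<and>
     red 1 = 1 \<and>
     red ` val_ring v = UNIV \<and>
     (\<forall>x\<in>val_ring v. red x = 0 \<longleftrightarrow> x \<in> max_ideal v)"

text \<open>F (with valuation v) is a non-archimedean local field with residue field k
  (via red) and uniformiser \<pi>: complete for a normalised discrete valuation with finite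
  residue field (finiteness comes from the sort of k).\<close>
definition nonarch_local_field ::
  "('f::field \<Rightarrow> int) \<Rightarrow> ('f \<Rightarrow> 'k::{field,finite}) \<Rightarrow> 'f \<Rightarrow> bool" where
  "nonarch_local_field v red \<pi> \<longleftrightarrow>
     discrete_valuation v \<and> val_complete v \<and> residue_map v red \<and> \<pi> \<noteq> 0 \<and> v \<pi> = 1"

definition GLmat :: "nat \<Rightarrow> 'a::field mat set" where
  "GLmat n = {A \<in> carrier_mat n n. det A \<noteq> 0}"

definition Kn :: "('f::field \<Rightarrow> int) \<Rightarrow> nat \<Rightarrow> 'f mat set" where
  "Kn v n = {A \<in> carrier_mat n n. (\<forall>i<n. \<forall>j<n. A $$ (i,j) \<in> val_ring v) \<and>
                det A \<noteq> 0 \<and> v (det A) = 0}"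

definition Knm :: "('f::field \<Rightarrow> int) \<Rightarrow> nat \<Rightarrow> nat \<Rightarrow> 'f mat set" where
  "Knm v n m = {A \<in> Kn v n. (\<forall>j<n-1. in_pow_ideal v (int m) (A $$ (n-1, j))) \<and>
                 in_pow_ideal v (int m) (A $$ (n-1, n-1) - 1)}"

text \<open>g = diag(\<pi>^\<alpha>_{n-1}, ..., \<pi>^\<alpha>_1, 1): the i-th diagonal entry (0-based, i < n-1)
  is \<pi>^\<alpha>_{n-1-i}, the last one is 1.\<close>
definition gdiag :: "'f::field \<Rightarrow> nat \<Rightarrow> (nat \<Rightarrow> nat) \<Rightarrow> 'f mat" where
  "gdiag \<pi> n \<alpha> = mat n n (\<lambda>(i,j). if i = j then (if i < n - 1 then \<pi> ^ \<alpha> (n - 1 - i) else 1) else 0)"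

text \<open>K_n \<inter> g K_n(m) g^{-1}\<close>
definition Kn_cap_conj :: "('f::field \<Rightarrow> int) \<Rightarrow> nat \<Rightarrow> nat \<Rightarrow> 'f mat \<Rightarrow> 'f mat set" where
  "Kn_cap_conj v n m g = {k \<in> Kn v n. \<exists>h\<in>Knm v n m. k * g = g * h}"

text \<open>Image in GL_n(k_F) = K_n/K_n^1 (reduction of entries).\<close>
definition reduce_mat :: "('f \<Rightarrow> 'k) \<Rightarrow> 'f mat \<Rightarrow> 'k mat" where
  "reduce_mat red A = map_mat red A"

definition is_rep ::
  "('r::field \<Rightarrow> 'v::ab_group_add \<Rightarrow> 'v) \<Rightarrow> nat \<Rightarrow> ('k::field mat \<Rightarrow> 'v \<Rightarrow> 'v) \<Rightarrow> bool" where
  "is_rep scale n \<rho> \<longleftrightarrow> vector_space scale \<and>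
     (\<forall>A\<in>GLmat n. Vector_Spaces.linear scale scale (\<rho> A)) \<and>
     (\<forall>A\<in>GLmat n. \<forall>B\<in>GLmat n. \<rho> (A * B) = \<rho> A \<circ> \<rho> B) \<and>
     \<rho> (1\<^sub>m n) = id"

definition irreducible_rep ::
  "('r::field \<Rightarrow> 'v::ab_group_add \<Rightarrow> 'v) \<Rightarrow> nat \<Rightarrow> ('k::field mat \<Rightarrow> 'v \<Rightarrow> 'v) \<Rightarrow> bool" where
  "irreducible_rep scale n \<rho> \<longleftrightarrow> is_rep scale n \<rho> \<and> (\<exists>w::'v. w \<noteq> 0) \<and>
     (\<forall>W. module.subspace scale W \<longrightarrow> (\<forall>A\<in>GLmat n. \<forall>w\<in>W. \<rho> A w \<in> W) \<longrightarrow>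
          W = {0} \<or> W = UNIV)"

text \<open>Block index of row i for the standard parabolic with cut points S \<subseteq> {1..<n}.\<close>
definition blk :: "nat set \<Rightarrow> nat \<Rightarrow> nat" where
  "blk S i = card {s\<in>S. s \<le> i}"

definition std_unip_radical :: "nat \<Rightarrow> nat set \<Rightarrow> 'k::field mat set" where
  "std_unip_radical n S = {A \<in> carrier_mat n n. \<forall>i<n. \<forall>j<n.
      (blk S i = blk S j \<longrightarrow> A $$ (i,j) = (if i = j then 1 else 0)) \<and>
      (blk S i > blk S j \<longrightarrow> A $$ (i,j) = 0)}"

text \<open>Unipotent radical of the parabolic x P_S x^{-1}: the conjugate x U_S x^{-1}.\<close>
definition unip_radical :: "nat \<Rightarrow> nat set \<Rightarrow> 'k::field mat \<Rightarrow> 'k mat set" where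
  "unip_radical n S x = {y \<in> carrier_mat n n. \<exists>u\<in>std_unip_radical n S. y * x = x * u}"

text \<open>Cuspidal: irreducible, and no nonzero vector fixed by the unipotent radical of any
  proper parabolic subgroup (all conjugates of proper standard parabolics, S \<noteq> {}).\<close>
definition cuspidal_rep ::
  "('r::field \<Rightarrow> 'v::ab_group_add \<Rightarrow> 'v) \<Rightarrow> nat \<Rightarrow> ('k::field mat \<Rightarrow> 'v \<Rightarrow> 'v) \<Rightarrow> bool" where
  "cuspidal_rep scale n \<rho> \<longleftrightarrow> irreducible_rep scale n \<rho> \<and>
     (\<forall>S. S \<subseteq> {1..<n} \<longrightarrow> S \<noteq> {} \<longrightarrow> (\<forall>x\<in>GLmat n. \<forall>w.
        (\<forall>y\<in>unip_radical n S x. \<rho> y w = w) \<longrightarrow> w = 0))"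

text \<open>Hom_{R[H]}(1,\<tau>) = 0, i.e. \<tau> has no nonzero H-fixed vector.\<close>
definition no_invariants :: "('k mat \<Rightarrow> 'v::zero \<Rightarrow> 'v) \<Rightarrow> 'k mat set \<Rightarrow> bool" where
  "no_invariants \<rho> H \<longleftrightarrow> (\<forall>w. (\<forall>h\<in>H. \<rho> h w = w) \<longrightarrow> w = 0)"

end

theory Submission
  imports Defs
begin

lemma mult_entry:
  assumes "A \<in> carrier_mat n n" "B \<in> carrier_mat n n" "i < n" "j < n"
  shows "(A * B) $$ (i,j) = (\<Sum>k<n. A $$ (i,k) * B $$ (k,j))"
  using assms by (simp add: scalar_prod_def lessThan_atLeast0)

lemma det_unit_lower:
  fixes A :: "'a::comm_ring_1 mat"
  assumes "A \<in> carrier_mat n n" "\<And>i j. i < j \<Longrightarrow> j < n \<Longrightarrow> A $$ (i,j) = 0"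
    "\<And>i. i < n \<Longrightarrow> A $$ (i,i) = 1"
  shows "det A = 1"
proof -
  have "det A = prod_list (diag_mat A)" by (rule det_lower_triangular[OF assms(2) assms(1)])
  also have "diag_mat A = map (\<lambda>i. 1) [0..<n]"
    using assms(1,3) by (auto simp: diag_mat_def)
  also have "prod_list (map (\<lambda>i. (1::'a)) [0..<n]) = 1"
    by (induct n) auto
  finally show ?thesis .
qed

lemma vr_mult:
  assumes dv: "discrete_valuation v" and "x \<in> val_ring v" "y \<in> val_ring v"
  shows "x * y \<in> val_ring v"
  using assms unfolding discrete_valuation_def val_ring_def in_pow_ideal_def
  by (cases "x = 0 \<or> y = 0") auto

lemma v_one: assumes "discrete_valuation v" shows "v 1 = 0"
proof -
  have "\<forall>x y. x \<noteq> 0 \<longrightarrow> y \<noteq> 0 \<longrightarrow> v (x * y) = v x + v y" using assms unfolding discrete_valuation_def by auto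
  hence "v (1*1) = v 1 + v 1" by (metis one_neq_zero)
  thus ?thesis by simp
qed

lemma v_pow: assumes "discrete_valuation v" "\<pi> \<noteq> 0" "v \<pi> = 1"
  shows "v (\<pi> ^ t) = int t"
proof (induct t)
  case 0 then show ?case using v_one[OF assms(1)] by simp
next
  case (Suc t)
  have "v (\<pi> * \<pi> ^ t) = v \<pi> + v (\<pi> ^ t)" using assms unfolding discrete_valuation_def by auto
  then show ?case using Suc assms by simp
qed

lemma pow_vr: assumes "discrete_valuation v" "\<pi> \<noteq> 0" "v \<pi> = 1"
  shows "\<pi> ^ t \<in> val_ring v"
  using v_pow[OF assms] unfolding val_ring_def in_pow_ideal_def by simp

theorem proposition4p7:
  fixes v :: "'f::field \<Rightarrow> int" and red :: "'f \<Rightarrow> 'k::{field,finite}" and \<pi> :: 'f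
    and scale :: "'r::alg_closed_field \<Rightarrow> 'v::ab_group_add \<Rightarrow> 'v"
    and \<tau> :: "'k mat \<Rightarrow> 'v \<Rightarrow> 'v"
    and n m :: nat and \<alpha> :: "nat \<Rightarrow> nat"
  assumes F: "nonarch_local_field v red \<pi>"
    and charR: "CHAR('r) \<noteq> CHAR('k)"
    and n: "n \<ge> 2" and m: "m \<ge> 1"
    and cusp: "cuspidal_rep scale n \<tau>"
    and \<alpha>_mono: "\<forall>i j. 1 \<le> i \<longrightarrow> i \<le> j \<longrightarrow> j \<le> n - 1 \<longrightarrow> \<alpha> i \<le> \<alpha> j"
    and \<alpha>_top: "\<alpha> (n - 1) \<ge> m"
  shows "no_invariants \<tau> (reduce_mat red ` Kn_cap_conj v n m (gdiag \<pi> n \<alpha>))"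
proof -
  have dv: "discrete_valuation v" and rm: "residue_map v red" and pi0: "\<pi> \<noteq> 0"
    and vpi: "v \<pi> = 1" using F unfolding nonarch_local_field_def by auto
  have red1: "red 1 = 1" using rm unfolding residue_map_def by auto
  have red0: "red 0 = 0" using rm unfolding residue_map_def val_ring_def max_ideal_def in_pow_ideal_def
    by auto
  have surj: "\<exists>z. z \<in> val_ring v \<and> red z = c" for c
    using rm unfolding residue_map_def by (metis UNIV_I imageE)
  define lift where "lift c = (SOME z. z \<in> val_ring v \<and> red z = c)" for c
  have lift: "lift c \<in> val_ring v" "red (lift c) = c" for c
    using someI_ex[OF surj[of c]] unfolding lift_def by auto
  have vr0: "0 \<in> val_ring v" and vr1: "(1::'f) \<in> val_ring v"
    using v_one[OF dv] unfolding val_ring_def in_pow_ideal_def by auto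
  define w0 :: "'k mat" where "w0 = mat n n (\<lambda>(i,j). if i + j = n - 1 then 1 else 0)"
  have w0c: "w0 \<in> carrier_mat n n" unfolding w0_def by simp
  have w0w0: "w0 * w0 = 1\<^sub>m n"
  proof (rule eq_matI)
    fix i j assume ij: "i < dim_row (1\<^sub>m n :: 'k mat)" "j < dim_col (1\<^sub>m n :: 'k mat)"
    hence ij': "i < n" "j < n" by auto
    have "(w0 * w0) $$ (i,j) = (\<Sum>k<n. (if k = n - 1 - i then (if (n - 1 - i) + j = n - 1 then 1 else 0) else 0))"
      unfolding mult_entry[OF w0c w0c ij'] using ij' by (intro sum.cong) (auto simp: w0_def)
    also have "\<dots> = (1\<^sub>m n :: 'k mat) $$ (i,j)" using ij' by (subst sum.delta) auto
    finally show "(w0 * w0) $$ (i,j) = (1\<^sub>m n :: 'k mat) $$ (i,j)" .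
  qed (auto simp: w0_def)
  have w0GL: "w0 \<in> GLmat n"
  proof -
    have "det w0 * det w0 = 1" using det_mult[OF w0c w0c] w0w0 by simp
    thus ?thesis using w0c unfolding GLmat_def by auto
  qed
  have S: "{n - 1} \<subseteq> {1..<n}" "{n-1} \<noteq> {}" using n by auto
  have blk: "blk {n - 1} i = (if n - 1 \<le> i then 1 else 0)" for i
  proof -
    have "{s\<in>{n - 1}. s \<le> i} = (if n - 1 \<le> i then {n - 1} else {})" by auto
    thus ?thesis unfolding blk_def by simp
  qed
  define e where "e i = (if i < n - 1 then \<alpha> (n - 1 - i) else 0)" for i
  have e0: "e 0 = \<alpha> (n - 1)" using n unfolding e_def by auto
  have ele: "e i \<le> e 0" if "i < n" for i
    using \<alpha>_mono that n unfolding e_def by auto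
  have gdef: "gdiag \<pi> n \<alpha> = mat n n (\<lambda>(i,j). if i = j then \<pi> ^ e i else 0)"
    unfolding gdiag_def e_def by (rule cong_mat) auto
  have gc: "gdiag \<pi> n \<alpha> \<in> carrier_mat n n" unfolding gdef by simp
  have multg: "(A * gdiag \<pi> n \<alpha>) $$ (i,j) = A $$ (i,j) * \<pi> ^ e j"
    if "A \<in> carrier_mat n n" "i < n" "j < n" for A i j
  proof -
    have "(A * gdiag \<pi> n \<alpha>) $$ (i,j) = (\<Sum>k<n. if k = j then A $$ (i,k) * \<pi> ^ e j else 0)"
      unfolding mult_entry[OF that(1) gc that(2,3)] using that by (intro sum.cong) (auto simp: gdef)
    thus ?thesis using that by (simp add: sum.delta)
  qed
  have gmult: "(gdiag \<pi> n \<alpha> * A) $$ (i,j) = \<pi> ^ e i * A $$ (i,j)"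
    if "A \<in> carrier_mat n n" "i < n" "j < n" for A i j
  proof -
    have "(gdiag \<pi> n \<alpha> * A) $$ (i,j) = (\<Sum>k<n. if k = i then \<pi> ^ e i * A $$ (i,j) else 0)"
      unfolding mult_entry[OF gc that(1) that(2,3)] using that by (intro sum.cong) (auto simp: gdef)
    thus ?thesis using that by (simp add: sum.delta)
  qed
  have key: "y \<in> reduce_mat red ` Kn_cap_conj v n m (gdiag \<pi> n \<alpha>)"
    if y: "y \<in> unip_radical n {n - 1} w0" for y
  proof -
    from y obtain u where yc: "y \<in> carrier_mat n n" and u: "u \<in> std_unip_radical n {n - 1}"
      and yu: "y * w0 = w0 * u" unfolding unip_radical_def by auto
    have uc: "u \<in> carrier_mat n n" using u unfolding std_unip_radical_def by auto
    have ue: "u $$ (i,j) = (if i = j then 1 else 0)" if "i < n" "j < n" "\<not> (i < n - 1 \<and> j = n - 1)" for i j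
    proof -
      have P: "((if n - 1 \<le> i then 1 else 0::nat) = (if n - 1 \<le> j then 1 else 0) \<longrightarrow> u $$ (i,j) = (if i = j then 1 else 0)) \<and>
          ((if n - 1 \<le> j then 1 else 0::nat) < (if n - 1 \<le> i then 1 else 0) \<longrightarrow> u $$ (i,j) = 0)"
        using u that(1,2) unfolding std_unip_radical_def blk by blast
      show ?thesis
      proof (cases "n - 1 \<le> i")
        case True
        then show ?thesis using P that by (cases "n - 1 \<le> j") auto
      next
        case False
        then show ?thesis using P that by (cases "n - 1 \<le> j") auto
      qed
    qed
    have yent: "y $$ (i,j) = u $$ (n - 1 - i, n - 1 - j)" if "i < n" "j < n" for i j
    proof -
      have nj: "n - 1 - j < n" using that by auto
      have "(y * w0) $$ (i, n - 1 - j) = (\<Sum>k<n. if k = j then y $$ (i,k) else 0)"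
        unfolding mult_entry[OF yc w0c that(1) nj] using that by (intro sum.cong) (auto simp: w0_def)
      also have "\<dots> = y $$ (i,j)" using that by (simp add: sum.delta)
      finally have 1: "(y * w0) $$ (i, n - 1 - j) = y $$ (i,j)" .
      have "(w0 * u) $$ (i, n - 1 - j) = (\<Sum>k<n. if k = n - 1 - i then u $$ (k, n - 1 - j) else 0)"
        unfolding mult_entry[OF w0c uc that(1) nj] using that by (intro sum.cong) (auto simp: w0_def)
      also have "\<dots> = u $$ (n - 1 - i, n - 1 - j)" using that by (simp add: sum.delta)
      finally show ?thesis using 1 yu by simp
    qed
    have yd: "y $$ (i,j) = (if i = j then 1 else 0)" if "i < n" "j < n" "j \<noteq> 0 \<or> i = 0" for i j
    proof -
      have a: "\<not> (n-1-i < n - 1 \<and> n-1-j = n - 1)" using that by auto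
      have b: "(n-1-i = n-1-j) = (i = j)" using that by auto
      show ?thesis using yent[OF that(1,2)] ue[of "n-1-i" "n-1-j", OF _ _ a] b that(1,2)
        by (simp only: b)
    qed
    define c where "c i = lift (y $$ (i,0))" for i
    define k :: "'f mat" where "k = mat n n (\<lambda>(i,j). if i = j then 1 else if j = 0 then c i else 0)"
    define h :: "'f mat" where "h = mat n n (\<lambda>(i,j). if i = j then 1 else if j = 0 then \<pi> ^ (e 0 - e i) * c i else 0)"
    have kc: "k \<in> carrier_mat n n" and hc: "h \<in> carrier_mat n n" unfolding k_def h_def by auto
    have cvr: "c i \<in> val_ring v" for i unfolding c_def by (rule lift)
    have detk: "det k = 1" by (rule det_unit_lower[OF kc]) (auto simp: k_def)
    have deth: "det h = 1" by (rule det_unit_lower[OF hc]) (auto simp: h_def)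
    have kK: "k \<in> Kn v n" unfolding Kn_def using kc detk v_one[OF dv] cvr vr0 vr1
      by (auto simp: k_def)
    have hK: "h \<in> Kn v n" unfolding Kn_def using hc deth v_one[OF dv] cvr vr0 vr1
      vr_mult[OF dv pow_vr[OF dv pi0 vpi] cvr]
      by (auto simp: h_def)
    have n0: "n - 1 \<noteq> 0" "0 < n" using n by auto
    have last: "in_pow_ideal v (int m) (\<pi> ^ e 0 * c (n - 1))"
    proof (cases "c (n - 1) = 0")
      case False
      have "v (\<pi> ^ e 0 * c (n - 1)) = v (\<pi> ^ e 0) + v (c (n - 1))"
        using dv False pi0 unfolding discrete_valuation_def by auto
      moreover have "v (c (n - 1)) \<ge> 0" using cvr[of "n-1"] False
        unfolding val_ring_def in_pow_ideal_def by auto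
      ultimately show ?thesis using v_pow[OF dv pi0 vpi] e0 \<alpha>_top
        unfolding in_pow_ideal_def by auto
    qed (simp add: in_pow_ideal_def)
    have hKm: "h \<in> Knm v n m" unfolding Knm_def using hK n0 last
      by (auto simp: h_def in_pow_ideal_def e_def)
    have kgh: "k * gdiag \<pi> n \<alpha> = gdiag \<pi> n \<alpha> * h"
    proof (rule eq_matI)
      fix i j assume "i < dim_row (gdiag \<pi> n \<alpha> * h)" "j < dim_col (gdiag \<pi> n \<alpha> * h)"
      hence ij: "i < n" "j < n" using gc hc by auto
      have pe: "\<pi> ^ e i * \<pi> ^ (e 0 - e i) = \<pi> ^ e 0"
        using ele[OF ij(1)] by (simp add: power_add[symmetric])
      show "(k * gdiag \<pi> n \<alpha>) $$ (i,j) = (gdiag \<pi> n \<alpha> * h) $$ (i,j)"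
        unfolding multg[OF kc ij] gmult[OF hc ij] using ij pe
        by (auto simp: k_def h_def mult.assoc[symmetric] mult.commute)
    qed (use gc hc kc in auto)
    have kin: "k \<in> Kn_cap_conj v n m (gdiag \<pi> n \<alpha>)"
      unfolding Kn_cap_conj_def using kK hKm kgh by auto
    have "reduce_mat red k = y"
    proof (rule eq_matI)
      fix i j assume "i < dim_row y" "j < dim_col y"
      hence ij: "i < n" "j < n" using yc by auto
      show "reduce_mat red k $$ (i,j) = y $$ (i,j)"
        using ij yd[OF ij] lift red0 red1 unfolding reduce_mat_def
        by (auto simp: k_def c_def)
    qed (use yc kc in \<open>auto simp: reduce_mat_def\<close>)
    thus ?thesis using kin by blast
  qed
  show ?thesis unfolding no_invariants_def
  proof (intro allI impI)
    fix w assume fx: "\<forall>h\<in>reduce_mat red ` Kn_cap_conj v n m (gdiag \<pi> n \<alpha>). \<tau> h w = w"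
    have "\<forall>y\<in>unip_radical n {n - 1} w0. \<tau> y w = w" using fx key by blast
    thus "w = 0" using cusp S w0GL unfolding cuspidal_rep_def by blast
  qed
qed

end
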